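(* For $k\ge0$ let $\bar H_k\in\mathbb{R}^{p\times p}$ be (random) symmetric matrices with symmetric indefinite factorizations $\bar H_k=P_k^TL_kB_kL_k^TP_k$, and suppose $\bar H_k\to H(\theta^* )$ a.s., where $H(\theta^* )$ is positive definite. Let $B_k=Q_k\Lambda_kQ_k^T$ be an eigendecomposition, $\Lambda_k=\mathrm{diag}(\lambda_{k1},\dots,\lambda_{kp})$, and with a constant threshold $\underline{\tau}$ set $\bar\Lambda_k=\mathrm{diag}(\max\{\underline{\tau},|\lambda_{kj}|\})_{j=1}^p$ and $\bar{\bar H}_k=P_k^TL_kQ_k\bar\Lambda_kQ_k^TL_k^TP_k$. If $0<\underline{\tau}\le\lambda_{\min}(H(\theta^* ))/(2\bar\sigma^2)$, then there exists $K_1$ such that $\bar{\bar H}_k=\bar H_k$ for all $k>K_1$.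
   Context: In the factorization: $P_k$ permutation, $B_k$ block diagonal with symmetric $1\times1$ or $2\times2$ blocks, $L_k$ unit lower triangular with entries bounded in magnitude by a fixed constant independent of $k$. $\bar\sigma$ is a constant, independent of $k$ and the sample path, with $\sigma_{\max}(L_k)\le\bar\sigma$ for all $k$ (largest singular value). $H(\theta^* )$ is the Hessian of the loss at its minimizer $\theta^*$ and $\bar H_k$ is the running Hessian estimate of a second-order simultaneous-perturbation stochastic approximation algorithm. *)

theory Defs
  imports "HOL-Probability.Probability"
begin

text \<open>Square matrices are of type real^'p^'p; the index type 'p is finite and
linearly ordered (to speak of lower triangular / block structure).\<close>

definition symmetric_mat :: "real^'n^'n \<Rightarrow> bool" where
  "symmetric_mat A \<longleftrightarrow> transpose A = A"

definition permutation_mat :: "real^'n^'n \<Rightarrow> bool" where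
  "permutation_mat P \<longleftrightarrow>
     (\<exists>\<sigma>. \<sigma> permutes (UNIV::'n set) \<and> P = (\<chi> i j. if \<sigma> i = j then 1 else 0))"

definition unit_lower_triangular :: "real^('n::{finite,linorder})^('n::{finite,linorder}) \<Rightarrow> bool" where
  "unit_lower_triangular L \<longleftrightarrow> (\<forall>i. L$i$i = 1) \<and> (\<forall>i j. i < j \<longrightarrow> L$i$j = 0)"

text \<open>Block diagonal with symmetric 1x1 or 2x2 diagonal blocks: the index set is cut
into consecutive blocks (fibres of a monotone labelling) of size at most 2, and all
nonzero entries lie inside the diagonal blocks; the matrix is symmetric.\<close>
definition block_diag_12 :: "real^('n::{finite,linorder})^('n::{finite,linorder}) \<Rightarrow> bool" where
  "block_diag_12 B \<longleftrightarrow> symmetric_mat B \<and>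
     (\<exists>blk::'n \<Rightarrow> nat. mono blk \<and> (\<forall>m. card {i. blk i = m} \<le> 2) \<and>
        (\<forall>i j. B$i$j \<noteq> 0 \<longrightarrow> blk i = blk j))"

definition diag_mat :: "real^'n \<Rightarrow> real^'n^'n" where
  "diag_mat d = (\<chi> i j. if i = j then d$i else 0)"

definition positive_definite :: "real^'n^'n \<Rightarrow> bool" where
  "positive_definite A \<longleftrightarrow> symmetric_mat A \<and> (\<forall>x. x \<noteq> 0 \<longrightarrow> x \<bullet> (A *v x) > 0)"

definition eigenvalues_mat :: "real^'n^'n \<Rightarrow> real set" where
  "eigenvalues_mat A = {l. \<exists>v. v \<noteq> 0 \<and> A *v v = l *\<^sub>R v}"

definition lambda_min :: "real^'n^'n \<Rightarrow> real" where
  "lambda_min A = Min (eigenvalues_mat A)"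

text \<open>Largest singular value = spectral (operator) norm.\<close>
definition sigma_max :: "real^'n^'n \<Rightarrow> real" where
  "sigma_max A = onorm (\<lambda>x. A *v x)"

end

theory Submission
  imports Defs
begin

lemma dot_sym: "(x::real^'n) \<bullet> (A *v y) = (transpose A *v x) \<bullet> y"
  by (metis dot_lmul_matrix transpose_matrix_vector)
lemma symm_dot: "symmetric_mat A \<Longrightarrow> (A *v x) \<bullet> (y::real^'n) = x \<bullet> (A *v y)"
  unfolding symmetric_mat_def by (metis dot_sym)

lemma orth_norm: "orthogonal_matrix (Q::real^'n^'n) \<Longrightarrow> norm (Q *v x) = norm x"
  using orthogonal_transformation_matrix[of "\<lambda>x. Q *v x"]
  by (simp add: orthogonal_transformation_norm)

lemma perm_orth: assumes "permutation_mat (P::real^'n^'n)" shows "orthogonal_matrix P"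
proof -
  obtain s where s: "s permutes UNIV" and P: "P = (\<chi> i j. if s i = j then 1 else 0)"
    using assms unfolding permutation_mat_def by blast
  have inj: "s i = s k \<longleftrightarrow> i = k" for i k using s by (metis permutes_inj injD)
  have "(P ** transpose P)$i$k = mat 1 $i$k" for i k
  proof -
    have "(P ** transpose P)$i$k = (\<Sum>j\<in>UNIV. (if s i = j then 1 else 0) * (if s k = j then 1 else 0::real))"
      by (simp add: P matrix_matrix_mult_def transpose_def)
    also have "\<dots> = (\<Sum>j\<in>UNIV. if s i = j then (if s k = j then 1 else 0) else 0)"
      by (rule sum.cong) auto
    also have "\<dots> = (if s k = s i then 1 else 0)" by (simp add: sum.delta)
    also have "\<dots> = mat 1 $i$k" using inj[of k i] by (simp add: mat_def)
    finally show ?thesis .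
  qed
  then have "P ** transpose P = mat 1" by (simp add: vec_eq_iff)
  then have "orthogonal_matrix (transpose P)" by (simp add: orthogonal_matrix)
  then show ?thesis by (simp add: orthogonal_matrix_def)
qed

lemma LT_inj: fixes L :: "real^('n::{finite,linorder})^('n::{finite,linorder})"
  assumes "unit_lower_triangular L"
  and "transpose L *v v = 0" shows "v = 0"
proof (rule ccontr)
  assume "v \<noteq> 0"
  define S where "S = {i. v$i \<noteq> 0}"
  have "S \<noteq> {}" using \<open>v \<noteq> 0\<close> by (auto simp: S_def vec_eq_iff)
  define i where "i = Max S"
  have iS: "i \<in> S" using \<open>S \<noteq> {}\<close> unfolding i_def by (intro Max_in) auto
  have big: "v$j = 0" if "j > i" for j
  proof (rule ccontr)
    assume "v$j \<noteq> 0"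
    then have "j \<in> S" by (simp add: S_def)
    then have "j \<le> i" unfolding i_def by (intro Max_ge) auto
    then show False using that by simp
  qed
  have z: "L$j$i * v$j = 0" if "j \<in> UNIV - {i}" for j
  proof (cases "j < i")
    case True then show ?thesis using assms(1) unfolding unit_lower_triangular_def by simp
  next
    case False then have "j > i" using that by auto
    then show ?thesis using big by simp
  qed
  have "(transpose L *v v)$i = (\<Sum>j\<in>UNIV. L$j$i * v$j)"
    by (simp add: vector_matrix_mult_def mult.commute)
  also have "\<dots> = L$i$i * v$i + (\<Sum>j\<in>UNIV-{i}. L$j$i * v$j)"
    by (rule sum.remove) auto
  also have "(\<Sum>j\<in>UNIV-{i}. L$j$i * v$j) = 0" using z by (rule sum.neutral[OF ballI])
  also have "L$i$i = 1" using assms(1) by (simp add: unit_lower_triangular_def)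
  finally have "(transpose L *v v)$i = v$i" by simp
  then show False using assms(2) iS by (simp add: S_def)
qed
lemma LT_bound: fixes L :: "real^'n^'n"
  assumes "sigma_max L \<le> s" shows "norm (transpose L *v w) \<le> s * norm w"
proof -
  let ?y = "transpose L *v w"
  have s0: "0 \<le> s" using assms onorm_pos_le[OF matrix_vector_mul_bounded_linear[of L]]
    unfolding sigma_max_def by linarith
  have "norm ?y ^ 2 = ?y \<bullet> ?y" by (simp add: power2_norm_eq_inner)
  also have "\<dots> = w \<bullet> (L *v ?y)" by (metis dot_sym inner_commute transpose_transpose)
  also have "\<dots> \<le> norm w * norm (L *v ?y)" by (rule Cauchy_Schwarz_ineq2[THEN abs_le_D1])
  also have "\<dots> \<le> norm w * (s * norm ?y)"
    using onorm[OF matrix_vector_mul_bounded_linear[of L], of ?y] assms unfolding sigma_max_def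
    by (intro mult_left_mono) (auto intro: order_trans[OF _ mult_right_mono] simp del: transpose_matrix_vector)
  finally have "norm ?y * norm ?y \<le> (s * norm w) * norm ?y" by (simp add: power2_eq_square algebra_simps)
  then show ?thesis using s0
    by (metis mult_right_le_imp_le norm_ge_zero order_le_less mult_nonneg_nonneg)
qed
lemma eig_finite: fixes A :: "real^'n^'n" assumes "symmetric_mat A"
  shows "finite (eigenvalues_mat A)"
proof -
  let ?E = "eigenvalues_mat A"
  have "\<forall>l\<in>?E. \<exists>v. v \<noteq> 0 \<and> A *v v = l *\<^sub>R v" by (simp add: eigenvalues_mat_def)
  then obtain v where v: "\<And>l. l \<in> ?E \<Longrightarrow> v l \<noteq> 0 \<and> A *v v l = l *\<^sub>R v l" by metis
  have inj: "inj_on v ?E"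
  proof (rule inj_onI)
    fix a b assume a: "a \<in> ?E" and b: "b \<in> ?E" and e: "v a = v b"
    have "a *\<^sub>R v a = b *\<^sub>R v a" using v[OF a] v[OF b] e by metis
    then show "a = b" using v[OF a] by (simp add: scaleR_cancel_right)
  qed
  have orth: "pairwise orthogonal (v ` ?E)"
  proof (clarsimp simp: pairwise_def)
    fix a b assume a: "a \<in> ?E" and b: "b \<in> ?E" and ne: "v a \<noteq> v b"
    then have "a \<noteq> b" by auto
    have "a * (v a \<bullet> v b) = (A *v v a) \<bullet> v b" using v[OF a] by simp
    also have "\<dots> = v a \<bullet> (A *v v b)" by (rule symm_dot[OF assms])
    also have "\<dots> = b * (v a \<bullet> v b)" using v[OF b] by simp
    finally have "(a - b) * (v a \<bullet> v b) = 0" by (simp add: algebra_simps)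
    then show "orthogonal (v a) (v b)" using \<open>a \<noteq> b\<close> by (simp add: orthogonal_def)
  qed
  have "0 \<notin> v ` ?E" using v by auto
  then have "independent (v ` ?E)" using orth pairwise_orthogonal_independent by blast
  then have "finite (v ` ?E)" using independent_bound by blast
  then show ?thesis using inj finite_imageD by blast
qed

lemma rayleigh: fixes A :: "real^'n^'n" assumes "symmetric_mat A"
  shows "\<exists>m. lambda_min A \<le> m \<and> (\<forall>x. m * (norm x)\<^sup>2 \<le> x \<bullet> (A *v x))"
proof -
  let ?f = "\<lambda>x. x \<bullet> (A *v x)"
  have "sphere (0::real^'n) 1 \<noteq> {}" using norm_axis_1[of undefined] unfolding sphere_def by (metis (mono_tags) dist_0_norm empty_iff mem_Collect_eq)
  moreover have "continuous_on (sphere 0 1) ?f" by (intro continuous_intros)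
  ultimately obtain x0 where x0: "x0 \<in> sphere 0 1" and mn: "\<And>y. y \<in> sphere 0 1 \<Longrightarrow> ?f x0 \<le> ?f y"
    using continuous_attains_inf[OF compact_sphere] by blast
  define m where "m = ?f x0"
  have n0: "norm x0 = 1" using x0 by simp
  have low: "m * (norm x)\<^sup>2 \<le> ?f x" for x
  proof (cases "x = 0")
    case True then show ?thesis by simp
  next
    case False
    let ?u = "(1 / norm x) *\<^sub>R x"
    have "m \<le> ?f ?u" unfolding m_def by (rule mn) (use False in simp)
    also have "?f ?u = ?f x / (norm x)\<^sup>2"
      by (simp add: matrix_vector_mult_scaleR power2_eq_square divide_simps)
    finally show ?thesis using False by (simp add: divide_simps)
  qed
  define r where "r = A *v x0 - m *\<^sub>R x0"
  define c where "c = ?f r - m * (norm r)\<^sup>2"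
  have quad: "0 \<le> 2 * t * (norm r)\<^sup>2 + t\<^sup>2 * c" for t
  proof -
    have "0 \<le> ?f (x0 + t *\<^sub>R r) - m * (norm (x0 + t *\<^sub>R r))\<^sup>2" using low[of "x0 + t *\<^sub>R r"] by simp
    also have "\<dots> = 2 * t * (norm r)\<^sup>2 + t\<^sup>2 * c"
    proof -
      have s: "(A *v r) \<bullet> x0 = r \<bullet> (A *v x0)" using symm_dot[OF assms] by (metis inner_commute)
      have F1: "?f (x0 + t *\<^sub>R r) = ?f x0 + 2 * t * (r \<bullet> (A *v x0)) + t\<^sup>2 * ?f r"
        using s by (simp add: matrix_vector_right_distrib matrix_vector_mult_scaleR inner_add_left inner_add_right
             algebra_simps power2_eq_square inner_commute)
      have F2: "(norm (x0 + t *\<^sub>R r))\<^sup>2 = 1 + 2 * t * (r \<bullet> x0) + t\<^sup>2 * (norm r)\<^sup>2"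
      proof -
        have x1: "x0 \<bullet> x0 = 1" using n0 by (metis norm_eq_1)
        have "(norm (x0 + t *\<^sub>R r))\<^sup>2 = (x0 + t *\<^sub>R r) \<bullet> (x0 + t *\<^sub>R r)" by (rule power2_norm_eq_inner)
        also have "\<dots> = x0 \<bullet> x0 + 2 * t * (r \<bullet> x0) + t\<^sup>2 * (r \<bullet> r)"
          by (simp add: inner_add_left inner_add_right algebra_simps power2_eq_square inner_commute)
        finally show ?thesis using x1 by (simp add: power2_norm_eq_inner)
      qed
      have F3: "(norm r)\<^sup>2 = r \<bullet> (A *v x0) - m * (r \<bullet> x0)"
        by (simp add: power2_norm_eq_inner r_def inner_diff_right)
      show ?thesis unfolding F1 F2 c_def m_def[symmetric] F3 by (simp add: algebra_simps)
    qed
    finally show ?thesis .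
  qed
  have "r = 0"
  proof (rule ccontr)
    assume "r \<noteq> 0"
    define R where "R = (norm r)\<^sup>2"
    have R: "R > 0" using \<open>r \<noteq> 0\<close> by (simp add: R_def)
    define t where "t = - R / (\<bar>c\<bar> + 1)"
    have "0 \<le> 2 * t * R + t\<^sup>2 * c" using quad[of t] by (simp add: R_def)
    also have "\<dots> \<le> 2 * t * R + t\<^sup>2 * \<bar>c\<bar>" by (intro add_left_mono mult_left_mono) auto
    also have "\<dots> = R\<^sup>2 / (\<bar>c\<bar> + 1) * (\<bar>c\<bar> / (\<bar>c\<bar> + 1) - 2)"
    proof -
      have gen: "2 * (- R / (a + 1)) * R + (- R / (a + 1))\<^sup>2 * a = R\<^sup>2 / (a + 1) * (a / (a + 1) - 2)"
        if "a \<ge> 0" for a :: real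
      proof -
        define b where "b = a + 1"
        have b: "b \<noteq> 0" using that by (simp add: b_def)
        have "a = b - 1" by (simp add: b_def)
        then show ?thesis unfolding b_def[symmetric] using b by (simp add: field_simps power2_eq_square)
      qed
      show ?thesis unfolding t_def by (rule gen) simp
    qed
    also have "\<dots> < 0"
    proof (rule mult_pos_neg)
      show "0 < R\<^sup>2 / (\<bar>c\<bar> + 1)" using R by simp
      have "\<bar>c\<bar> / (\<bar>c\<bar> + 1) < 1" by simp
      then show "\<bar>c\<bar> / (\<bar>c\<bar> + 1) - 2 < 0" by linarith
    qed
    finally show False by simp
  qed
  then have "A *v x0 = m *\<^sub>R x0" by (simp add: r_def)
  moreover have "x0 \<noteq> 0" using n0 by auto
  ultimately have "m \<in> eigenvalues_mat A" unfolding eigenvalues_mat_def by blast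
  then have "lambda_min A \<le> m" unfolding lambda_min_def using eig_finite[OF assms] by simp
  then show ?thesis using low by blast
qed
lemma diag_axis: "diag_mat d *v axis j 1 = d$j *\<^sub>R axis j (1::real)"
proof -
  have "(diag_mat d *v axis j 1) $ i = (d$j *\<^sub>R axis j (1::real)) $ i" for i
  proof -
    have "(diag_mat d *v axis j 1) $ i = (\<Sum>k\<in>UNIV. if k = j then (if i = j then d$i else 0) else 0)"
      unfolding diag_mat_def matrix_vector_mult_def axis_def vec_lambda_beta by (rule sum.cong) auto
    also have "\<dots> = (d$j *\<^sub>R axis j (1::real)) $ i" by (simp add: axis_def)
    finally show ?thesis .
  qed
  then show ?thesis by (simp add: vec_eq_iff)
qed

lemma eig_quad: fixes Q :: "real^'n^'n" assumes "orthogonal_matrix Q"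
  shows "(Q *v axis j 1) \<bullet> ((Q ** diag_mat d ** transpose Q) *v (Q *v axis j 1)) = d$j"
proof -
  have QQ: "transpose Q ** Q = mat 1" using assms by (simp add: orthogonal_matrix_def)
  have "(Q ** diag_mat d ** transpose Q) *v (Q *v axis j 1) = Q *v (diag_mat d *v ((transpose Q ** Q) *v axis j 1))"
    by (simp only: matrix_vector_mul_assoc matrix_mul_assoc)
  also have "\<dots> = Q *v (d$j *\<^sub>R axis j 1)" by (simp only: QQ matrix_vector_mul_lid diag_axis)
  finally have e: "(Q ** diag_mat d ** transpose Q) *v (Q *v axis j 1) = Q *v (d$j *\<^sub>R axis j 1)" .
  have "(Q *v axis j 1) \<bullet> (Q *v (d$j *\<^sub>R axis j 1)) = ((transpose Q ** Q) *v axis j 1) \<bullet> (d$j *\<^sub>R axis j 1)"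
    by (metis dot_sym matrix_vector_mul_assoc)
  also have "\<dots> = d$j" by (simp add: QQ inner_axis_axis)
  finally show ?thesis using e by simp
qed

lemma surj_LP: fixes L P :: "real^('n::{finite,linorder})^('n::{finite,linorder})"
  assumes "unit_lower_triangular L" "orthogonal_matrix P"
  shows "\<exists>z. transpose L *v (P *v z) = x"
proof -
  let ?f = "\<lambda>z. (transpose L ** P) *v z"
  have lin: "linear ?f" by simp
  have "inj ?f"
  proof (subst linear_injective_0[OF lin], intro allI impI)
    fix z assume "(transpose L ** P) *v z = 0"
    then have "transpose L *v (P *v z) = 0" by (simp only: matrix_vector_mul_assoc)
    then have "P *v z = 0" by (rule LT_inj[OF assms(1)])
    then have "norm z = 0" using orth_norm[OF assms(2), of z] by simp
    then show "z = 0" by simp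
  qed
  then have "surj ?f" using linear_injective_imp_surjective[OF lin] by blast
  then obtain z where "?f z = x" by (metis surjD)
  then show ?thesis by (metis matrix_vector_mul_assoc)
qed
theorem theoremA3:
  fixes M :: "'w measure"
    and Hbar :: "nat \<Rightarrow> 'w \<Rightarrow> real^('p::{finite,linorder})^('p::{finite,linorder})"
    and P L B Q :: "nat \<Rightarrow> 'w \<Rightarrow> real^('p::{finite,linorder})^('p::{finite,linorder})"
    and lam :: "nat \<Rightarrow> 'w \<Rightarrow> real^('p::{finite,linorder})"
    and Hstar :: "real^('p::{finite,linorder})^('p::{finite,linorder})"
    and sigmabar tau :: real
  assumes "prob_space M"
    and sym: "\<And>k \<omega>. symmetric_mat (Hbar k \<omega>)"
    and perm: "\<And>k \<omega>. permutation_mat (P k \<omega>)"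
    and blk: "\<And>k \<omega>. block_diag_12 (B k \<omega>)"
    and lower: "\<And>k \<omega>. unit_lower_triangular (L k \<omega>)"
    and Lbdd: "\<exists>c. \<forall>k \<omega> i j. \<bar>L k \<omega> $ i $ j\<bar> \<le> c"
    and sigma: "\<And>k \<omega>. sigma_max (L k \<omega>) \<le> sigmabar"
    and fact: "\<And>k \<omega>. Hbar k \<omega> = transpose (P k \<omega>) ** L k \<omega> ** B k \<omega> ** transpose (L k \<omega>) ** P k \<omega>"
    and orth: "\<And>k \<omega>. orthogonal_matrix (Q k \<omega>)"
    and eig: "\<And>k \<omega>. B k \<omega> = Q k \<omega> ** diag_mat (lam k \<omega>) ** transpose (Q k \<omega>)"
    and conv: "AE \<omega> in M. (\<lambda>k. Hbar k \<omega>) \<longlonglongrightarrow> Hstar"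
    and pd: "positive_definite Hstar"
    and tau_pos: "0 < tau"
    and tau_le: "tau \<le> lambda_min Hstar / (2 * sigmabar\<^sup>2)"
  shows "AE \<omega> in M. \<exists>K1. \<forall>k>K1.
           transpose (P k \<omega>) ** L k \<omega> ** Q k \<omega>
             ** diag_mat (\<chi> j. max tau \<bar>lam k \<omega> $ j\<bar>)
             ** transpose (Q k \<omega>) ** transpose (L k \<omega>) ** P k \<omega>
           = Hbar k \<omega>"
proof -
  have symH: "symmetric_mat Hstar" using pd by (simp add: positive_definite_def)
  obtain m where mle: "lambda_min Hstar \<le> m" and mq: "\<And>x. m * (norm x)\<^sup>2 \<le> x \<bullet> (Hstar *v x)"
    using rayleigh[OF symH] by blast
  have s0: "sigmabar \<noteq> 0" using tau_pos tau_le by (cases "sigmabar = 0") auto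
  have s2: "sigmabar\<^sup>2 > 0" using s0 by simp
  have lpos: "lambda_min Hstar > 0"
  proof -
    have "0 < lambda_min Hstar / (2 * sigmabar\<^sup>2)" using tau_pos tau_le by linarith
    then show ?thesis using s2 by (simp add: zero_less_divide_iff)
  qed
  have mpos: "m > 0" using lpos mle by linarith
  have taub: "tau < (3 * m / 4) / sigmabar\<^sup>2"
  proof -
    have "lambda_min Hstar / (2 * sigmabar\<^sup>2) \<le> m / (2 * sigmabar\<^sup>2)"
      using mle s2 by (simp add: divide_right_mono)
    also have "\<dots> < (3 * m / 4) / sigmabar\<^sup>2" using mpos s2 by (simp add: field_simps)
    finally show ?thesis using tau_le by linarith
  qed
  show ?thesis using conv
  proof (rule eventually_mono)
    fix \<omega> assume lim: "(\<lambda>k. Hbar k \<omega>) \<longlonglongrightarrow> Hstar"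
    define E where "E k = (\<Sum>i\<in>UNIV. \<Sum>j\<in>UNIV. \<bar>(Hbar k \<omega> - Hstar) $ i $ j\<bar>)" for k
    have "E \<longlonglongrightarrow> (\<Sum>i\<in>(UNIV::'p set). \<Sum>j\<in>(UNIV::'p set). \<bar>(Hstar - Hstar) $ i $ j\<bar>)"
      unfolding E_def by (intro tendsto_intros lim)
    then have "E \<longlonglongrightarrow> 0" by simp
    then have "eventually (\<lambda>k. E k < m / 4) sequentially"
      using mpos by (intro order_tendstoD(2)) auto
    then obtain N where N: "\<And>k. k \<ge> N \<Longrightarrow> E k < m / 4" by (auto simp: eventually_sequentially)
    show "\<exists>K1. \<forall>k>K1. transpose (P k \<omega>) ** L k \<omega> ** Q k \<omega>
             ** diag_mat (\<chi> j. max tau \<bar>lam k \<omega> $ j\<bar>)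
             ** transpose (Q k \<omega>) ** transpose (L k \<omega>) ** P k \<omega> = Hbar k \<omega>"
    proof (intro exI allI impI)
      fix k assume "N < k"
      then have Ek: "E k < m / 4" using N by simp
      have qf: "(3 * m / 4) * (norm z)\<^sup>2 \<le> z \<bullet> (Hbar k \<omega> *v z)" for z
      proof -
        let ?D = "Hbar k \<omega> - Hstar"
        have "norm (?D *v z) \<le> onorm ((*v) ?D) * norm z" by (rule onorm) simp
        also have "\<dots> \<le> E k * norm z"
          unfolding E_def by (intro mult_right_mono onorm_le_matrix_component_sum) simp
        finally have "norm (?D *v z) \<le> E k * norm z" .
        then have "\<bar>z \<bullet> (?D *v z)\<bar> \<le> norm z * (E k * norm z)"
          by (meson Cauchy_Schwarz_ineq2 mult_left_mono norm_ge_zero order_trans)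
        also have "\<dots> = E k * (norm z)\<^sup>2" by (simp add: power2_eq_square)
        also have "\<dots> \<le> (m / 4) * (norm z)\<^sup>2" using Ek
          by (intro mult_right_mono) auto
        finally have a: "\<bar>z \<bullet> (?D *v z)\<bar> \<le> (m / 4) * (norm z)\<^sup>2" .
        have "z \<bullet> (Hbar k \<omega> *v z) = z \<bullet> (Hstar *v z) + z \<bullet> (?D *v z)"
          by (simp add: matrix_vector_mult_diff_rdistrib inner_diff_right)
        then show ?thesis using a mq[of z] by linarith
      qed
      have lamj: "tau \<le> lam k \<omega> $ j" for j
      proof -
        define x where "x = Q k \<omega> *v axis j 1"
        have nx: "norm x = 1" unfolding x_def by (simp add: orth_norm[OF orth] norm_axis_1)
        have xb: "x \<bullet> (B k \<omega> *v x) = lam k \<omega> $ j" unfolding x_def eig by (rule eig_quad[OF orth])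
        have Po: "orthogonal_matrix (P k \<omega>)" by (rule perm_orth[OF perm])
        obtain z where z: "transpose (L k \<omega>) *v (P k \<omega> *v z) = x"
          using surj_LP[OF lower Po] by blast
        have "z \<bullet> (Hbar k \<omega> *v z) = z \<bullet> (transpose (P k \<omega>) *v (L k \<omega> *v (B k \<omega> *v (transpose (L k \<omega>) *v (P k \<omega> *v z)))))"
          unfolding fact by (simp only: matrix_vector_mul_assoc matrix_mul_assoc)
        also have "\<dots> = (P k \<omega> *v z) \<bullet> (L k \<omega> *v (B k \<omega> *v x))"
          using z by (metis dot_sym transpose_transpose)
        also have "\<dots> = x \<bullet> (B k \<omega> *v x)" using z by (metis dot_sym)
        finally have hz: "z \<bullet> (Hbar k \<omega> *v z) = lam k \<omega> $ j" using xb by simp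
        have "1 \<le> sigmabar * norm (P k \<omega> *v z)"
          using LT_bound[OF sigma, of k \<omega> "P k \<omega> *v z"] z nx by simp
        then have "1 \<le> sigmabar * norm z" by (simp add: orth_norm[OF Po])
        then have "1 \<le> (sigmabar * norm z)\<^sup>2" by (simp add: one_le_power)
        then have "1 / sigmabar\<^sup>2 \<le> (norm z)\<^sup>2" using s2 by (simp add: field_simps power_mult_distrib)
        then have "(3 * m / 4) * (1 / sigmabar\<^sup>2) \<le> (3 * m / 4) * (norm z)\<^sup>2"
          using mpos by (intro mult_left_mono) auto
        then have "(3 * m / 4) / sigmabar\<^sup>2 \<le> lam k \<omega> $ j" using qf[of z] hz by simp
        then show ?thesis using taub by linarith
      qed
      have "(\<chi> j. max tau \<bar>lam k \<omega> $ j\<bar>) = lam k \<omega>"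
      proof -
        have "max tau \<bar>lam k \<omega> $ j\<bar> = lam k \<omega> $ j" for j
          using lamj[of j] tau_pos by (simp add: max_def)
        then show ?thesis by (simp add: vec_eq_iff)
      qed
      then show "transpose (P k \<omega>) ** L k \<omega> ** Q k \<omega>
             ** diag_mat (\<chi> j. max tau \<bar>lam k \<omega> $ j\<bar>)
             ** transpose (Q k \<omega>) ** transpose (L k \<omega>) ** P k \<omega> = Hbar k \<omega>"
        by (simp add: fact eig matrix_mul_assoc)
    qed
  qed
qed

end
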